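(* Let $n_{k'}\le n_k$. Then $\ker(Z_{k,k'}^*Z_{k,k'})=\ker Z_{k,k'}=\mathrm{span}\{\varphi_{a_k}:a=n_{k'},\dots,n_k-1\}$, where kernels are taken of the operators restricted to $E_k$.
   Context: Let $\mathcal H$ be a finite-dimensional complex Hilbert space and $E_k,E_{k'}$ mutually orthogonal subspaces with $n_k=\dim E_k$, $n_{k'}=\dim E_{k'}$ and orthonormal bases $\{|a_k\rangle:0\le a\le n_k-1\}$, $\{|b_{k'}\rangle:0\le b\le n_{k'}-1\}$. For vectors $x,y$, $|x\rangle\langle y|$ is the operator $u\mapsto\langle y,u\rangle x$. $\zeta_k=e^{2\pi i/n_k}$. The transition operator is $Z_{k,k'}=n_k^{-1/2}\sum_{b=0}^{n_{k'}-1}\sum_{a=0}^{n_k-1}\zeta_k^{ba}|b_{k'}\rangle\langle a_k|$, and the $k$-entangled basis is $\varphi_{a_k}=n_k^{-1/2}\sum_{b=0}^{n_k-1}\zeta_k^{-ba}|b_k\rangle$, $0\le a\le n_k-1$. *)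

theory Defs
  imports Complex_Main "Jordan_Normal_Form.Schur_Decomposition"
begin

text \<open>The finite-dimensional complex Hilbert space H is modelled as C^m
  (complex vectors of dimension m) with the standard inner product
  <y,u> = u \<bullet>c y = sum_i cnj (y_i) * u_i; operators are m x m complex matrices,
  and the adjoint is the conjugate transpose mat_adjoint.\<close>

definition ketbra :: "complex vec \<Rightarrow> complex vec \<Rightarrow> complex mat" where
  "ketbra x y = mat (dim_vec x) (dim_vec y) (\<lambda>(i,j). x $ i * cnj (y $ j))"

definition msum :: "nat \<Rightarrow> nat \<Rightarrow> (nat \<Rightarrow> complex mat) \<Rightarrow> nat \<Rightarrow> complex mat" where
  "msum nr nc f N = foldr (\<lambda>i acc. f i + acc) [0..<N] (0\<^sub>m nr nc)"

definition cspan :: "nat \<Rightarrow> (nat \<Rightarrow> complex vec) \<Rightarrow> nat set \<Rightarrow> complex vec set" where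
  "cspan m v I = {finsum_vec TYPE(complex) m (\<lambda>i. c i \<cdot>\<^sub>v v i) I | c. True}"

definition orthonormal_fam :: "nat \<Rightarrow> (nat \<Rightarrow> complex vec) \<Rightarrow> nat \<Rightarrow> bool" where
  "orthonormal_fam m e n \<longleftrightarrow> (\<forall>i<n. e i \<in> carrier_vec m) \<and>
     (\<forall>i<n. \<forall>j<n. e i \<bullet>c e j = (if i = j then 1 else 0))"

definition zeta :: "nat \<Rightarrow> complex" where
  "zeta n = exp (2 * complex_of_real pi * \<i> / of_nat n)"

text \<open>Transition operator Z_{k,k'} (a : basis of E_k, b : basis of E_k').\<close>
definition transition_op :: "nat \<Rightarrow> (nat \<Rightarrow> complex vec) \<Rightarrow> nat \<Rightarrow> (nat \<Rightarrow> complex vec) \<Rightarrow> nat \<Rightarrow> complex mat" where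
  "transition_op m a nk b nk' =
     complex_of_real (1 / sqrt (real nk)) \<cdot>\<^sub>m
       msum m m (\<lambda>j. msum m m (\<lambda>i. (zeta nk ^ (j * i)) \<cdot>\<^sub>m ketbra (b j) (a i)) nk) nk'"

definition entangled :: "nat \<Rightarrow> (nat \<Rightarrow> complex vec) \<Rightarrow> nat \<Rightarrow> nat \<Rightarrow> complex vec" where
  "entangled m a nk i =
     complex_of_real (1 / sqrt (real nk)) \<cdot>\<^sub>v
       finsum_vec TYPE(complex) m (\<lambda>j. inverse (zeta nk ^ (j * i)) \<cdot>\<^sub>v a j) {0..<nk}"

definition ker_on :: "nat \<Rightarrow> complex mat \<Rightarrow> complex vec set \<Rightarrow> complex vec set" where
  "ker_on m A E = {v \<in> E. A *\<^sub>v v = 0\<^sub>v m}"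

end

theory Submission
  imports Defs
begin

definition lcv :: "nat \<Rightarrow> (nat \<Rightarrow> complex vec) \<Rightarrow> nat \<Rightarrow> (nat \<Rightarrow> complex) \<Rightarrow> complex vec" where
  "lcv m e n c = vec m (\<lambda>k. \<Sum>i\<in>{0..<n}. c i * e i $ k)"

lemma lcv_carrier[simp]: "lcv m e n c \<in> carrier_vec m"
  unfolding lcv_def by simp

lemma lcv_dim[simp]: "dim_vec (lcv m e n c) = m"
  unfolding lcv_def by simp

lemma finsum_lcv:
  assumes "\<forall>i<n. e i \<in> carrier_vec m"
  shows "finsum_vec TYPE(complex) m (\<lambda>i. c i \<cdot>\<^sub>v e i) {0..<n} = lcv m e n c"
proof (rule eq_vecI)
  have cl: "(\<lambda>i. c i \<cdot>\<^sub>v e i) \<in> {0..<n} \<rightarrow> carrier_vec m" using assms by auto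
  show "dim_vec (finsum_vec TYPE(complex) m (\<lambda>i. c i \<cdot>\<^sub>v e i) {0..<n}) = dim_vec (lcv m e n c)"
    using finsum_vec_closed[OF cl] by (simp add: lcv_def)
  fix k assume k: "k < dim_vec (lcv m e n c)"
  then have k': "k < m" by (simp add: lcv_def)
  show "finsum_vec TYPE(complex) m (\<lambda>i. c i \<cdot>\<^sub>v e i) {0..<n} $ k = lcv m e n c $ k"
    unfolding index_finsum_vec[OF _ k' cl, simplified] lcv_def using k' assms
    by (auto intro!: sum.cong)
qed

lemma lcv_inner:
  assumes o: "orthonormal_fam m e n" and i: "i < n"
  shows "lcv m e n c \<bullet>c e i = c i"
proof -
  have car: "\<And>l. l < n \<Longrightarrow> e l \<in> carrier_vec m" using o unfolding orthonormal_fam_def by auto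
  have "lcv m e n c \<bullet>c e i = (\<Sum>k\<in>{0..<m}. (\<Sum>l\<in>{0..<n}. c l * e l $ k) * cnj (e i $ k))"
    unfolding scalar_prod_def lcv_def using car[OF i] by (auto intro!: sum.cong)
  also have "\<dots> = (\<Sum>l\<in>{0..<n}. c l * (\<Sum>k\<in>{0..<m}. e l $ k * cnj (e i $ k)))"
    by (simp add: sum_distrib_left sum_distrib_right sum.swap[of _ "{0..<m}"] mult.assoc)
  also have "\<dots> = (\<Sum>l\<in>{0..<n}. c l * (e l \<bullet>c e i))"
    unfolding scalar_prod_def using car[OF i] by (auto intro!: sum.cong)
  also have "\<dots> = (\<Sum>l\<in>{0..<n}. if l = i then c l else 0)"
    using o i unfolding orthonormal_fam_def by (intro sum.cong) auto
  also have "\<dots> = c i" using i by simp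
  finally show ?thesis .
qed

lemma lcv_zero_iff:
  assumes o: "orthonormal_fam m e n"
  shows "lcv m e n c = 0\<^sub>v m \<longleftrightarrow> (\<forall>i<n. c i = 0)"
proof
  assume z: "lcv m e n c = 0\<^sub>v m"
  show "\<forall>i<n. c i = 0"
  proof (intro allI impI)
    fix i assume i: "i < n"
    have "e i \<in> carrier_vec m" using o i unfolding orthonormal_fam_def by auto
    then have "0\<^sub>v m \<bullet>c e i = 0" by simp
    then show "c i = 0" using lcv_inner[OF o i, of c] z by simp
  qed
next
  assume "\<forall>i<n. c i = 0"
  then show "lcv m e n c = 0\<^sub>v m" unfolding lcv_def by (intro eq_vecI) auto
qed

lemma lcv_cong: "(\<And>i. i < n \<Longrightarrow> c i = d i) \<Longrightarrow> lcv m e n c = lcv m e n d"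
  unfolding lcv_def by (intro eq_vecI) (auto intro!: sum.cong)

lemma lcv_lin:
  assumes "finite I"
  shows "finsum_vec TYPE(complex) m (\<lambda>l. d l \<cdot>\<^sub>v lcv m e n (f l)) I
     = lcv m e n (\<lambda>i. \<Sum>l\<in>I. d l * f l i)"
proof (rule eq_vecI)
  have cl: "(\<lambda>l. d l \<cdot>\<^sub>v lcv m e n (f l)) \<in> I \<rightarrow> carrier_vec m" by auto
  show "dim_vec (finsum_vec TYPE(complex) m (\<lambda>l. d l \<cdot>\<^sub>v lcv m e n (f l)) I) = dim_vec (lcv m e n (\<lambda>i. \<Sum>l\<in>I. d l * f l i))"
    using finsum_vec_closed[OF cl] by (simp add: lcv_def)
  fix k assume "k < dim_vec (lcv m e n (\<lambda>i. \<Sum>l\<in>I. d l * f l i))"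
  then have k': "k < m" by (simp add: lcv_def)
  show "finsum_vec TYPE(complex) m (\<lambda>l. d l \<cdot>\<^sub>v lcv m e n (f l)) I $ k = lcv m e n (\<lambda>i. \<Sum>l\<in>I. d l * f l i) $ k"
    unfolding index_finsum_vec[OF assms k' cl] using k'
    by (simp add: lcv_def sum_distrib_left sum_distrib_right sum.swap[of _ I] mult.assoc)
qed

lemma msum_list:
  assumes "\<forall>i\<in>set xs. f i \<in> carrier_mat nr nc"
  shows "foldr (\<lambda>i acc. f i + acc) xs (0\<^sub>m nr nc) = mat nr nc (\<lambda>p. \<Sum>i\<leftarrow>xs. f i $$ p)"
  using assms
proof (induction xs)
  case Nil then show ?case by (intro eq_matI) auto
next
  case (Cons x xs)
  then show ?case by (intro eq_matI) auto
qed

lemma msum_eq: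
  assumes "\<forall>i<N. f i \<in> carrier_mat nr nc"
  shows "msum nr nc f N = mat nr nc (\<lambda>p. \<Sum>i\<in>{0..<N}. f i $$ p)"
  unfolding msum_def using assms
  by (subst msum_list) (auto simp: sum_set_upt_conv_sum_list_nat[symmetric])

lemma zeta_pow: "zeta n ^ k = exp (of_nat k * (2 * complex_of_real pi * \<i> / of_nat n))"
  unfolding zeta_def by (simp only: exp_of_nat_mult)

lemma zeta_nz: "zeta n \<noteq> 0" unfolding zeta_def by simp

lemma zeta_pow_n: assumes "n > 0" shows "zeta n ^ n = 1"
proof -
  have "of_nat n * (2 * complex_of_real pi * \<i> / of_nat n) = 2 * complex_of_real pi * \<i>"
    using assms by (simp add: field_simps)
  then show ?thesis unfolding zeta_pow by simp
qed

lemma zeta_pow_ne1: assumes "0 < k" "k < n" shows "zeta n ^ k \<noteq> 1"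
proof
  assume h: "zeta n ^ k = 1"
  have "of_nat k * (2 * complex_of_real pi * \<i> / of_nat n) = \<i> * complex_of_real (2 * pi * k / n)"
    by (simp add: field_simps)
  then have "Re (zeta n ^ k) = cos (2 * pi * k / n)"
    unfolding zeta_pow by (simp add: Re_exp mult.commute)
  with h have "cos (2 * pi * k / n) = 1" by simp
  then obtain N :: int where N: "2 * pi * k / n = N * 2 * pi" by (auto simp: cos_one_2pi_int)
  then have "real k = N * n" using assms by (simp add: field_simps)
  then have kN: "int k = N * int n" by (metis of_int_eq_iff of_int_mult of_int_of_nat_eq)
  show False
  proof (cases "N \<le> 0")
    case True then have "N * int n \<le> 0" using assms by (simp add: mult_nonpos_nonneg)
    then show False using kN assms by simp
  next
    case False then have "N \<ge> 1" by simp
    then have "N * int n \<ge> 1 * int n" using assms by (intro mult_right_mono) auto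
    then show False using kN assms by linarith
  qed
qed

lemma zeta_orth:
  assumes p: "p < n" and q: "q < n"
  shows "(\<Sum>l\<in>{0..<n}. zeta n ^ (l * p) * inverse (zeta n ^ (l * q))) = (if p = q then of_nat n else 0)"
proof -
  define w where "w = zeta n ^ p * inverse (zeta n ^ q)"
  have n: "n > 0" using p by simp
  have eq: "zeta n ^ (l * p) * inverse (zeta n ^ (l * q)) = w ^ l" for l
    unfolding w_def by (simp add: power_mult_distrib power_mult[symmetric] mult.commute power_inverse)
  have wn: "w ^ n = 1"
  proof -
    have "w ^ n = (zeta n ^ n) ^ p * inverse ((zeta n ^ n) ^ q)"
      unfolding w_def by (simp add: power_mult_distrib power_mult[symmetric] mult.commute power_inverse)
    then show ?thesis using zeta_pow_n[OF n] by simp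
  qed
  have w1: "w = 1 \<longleftrightarrow> p = q"
  proof
    assume "w = 1"
    then have e: "zeta n ^ p = zeta n ^ q" unfolding w_def using zeta_nz by (simp add: field_simps)
    show "p = q"
    proof (rule ccontr)
      assume "p \<noteq> q"
      then consider "p < q" | "q < p" by linarith
      then show False
      proof cases
        case 1
        then have "zeta n ^ q = zeta n ^ p * zeta n ^ (q - p)" by (simp add: power_add[symmetric])
        then have "zeta n ^ (q - p) = 1" using e zeta_nz by simp
        then show False using zeta_pow_ne1[of "q - p" n] 1 q by simp
      next
        case 2
        then have "zeta n ^ p = zeta n ^ q * zeta n ^ (p - q)" by (simp add: power_add[symmetric])
        then have "zeta n ^ (p - q) = 1" using e zeta_nz by simp
        then show False using zeta_pow_ne1[of "p - q" n] 2 p by simp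
      qed
    qed
  next
    assume "p = q" then show "w = 1" unfolding w_def using zeta_nz by simp
  qed
  have "(\<Sum>l\<in>{0..<n}. zeta n ^ (l * p) * inverse (zeta n ^ (l * q))) = (\<Sum>l<n. w ^ l)"
    by (simp add: eq atLeast0LessThan)
  also have "\<dots> = (if p = q then of_nat n else 0)"
    unfolding sum_gp_strict using wn w1 by simp
  finally show ?thesis .
qed

lemma T_eq:
  assumes ca: "\<forall>i<nk. a i \<in> carrier_vec m" and cb: "\<forall>j<nk'. b j \<in> carrier_vec m"
  shows "transition_op m a nk b nk' = complex_of_real (1 / sqrt (real nk)) \<cdot>\<^sub>m
     mat m m (\<lambda>(r,s). \<Sum>j\<in>{0..<nk'}. \<Sum>i\<in>{0..<nk}. zeta nk ^ (j * i) * (b j $ r * cnj (a i $ s)))"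
proof -
  have inner: "msum m m (\<lambda>i. (zeta nk ^ (j * i)) \<cdot>\<^sub>m ketbra (b j) (a i)) nk
      = mat m m (\<lambda>(r,s). \<Sum>i\<in>{0..<nk}. zeta nk ^ (j * i) * (b j $ r * cnj (a i $ s)))" if j: "j < nk'" for j
  proof -
    have da: "dim_vec (a x) = m" if "x < nk" for x using ca that by auto
    have db: "dim_vec (b j) = m" using cb j by auto
    show ?thesis using ca cb j by (subst msum_eq) (auto simp: ketbra_def da db intro!: eq_matI sum.cong)
  qed
  have "msum m m (\<lambda>j. msum m m (\<lambda>i. (zeta nk ^ (j * i)) \<cdot>\<^sub>m ketbra (b j) (a i)) nk) nk'
      = mat m m (\<lambda>(r,s). \<Sum>j\<in>{0..<nk'}. \<Sum>i\<in>{0..<nk}. zeta nk ^ (j * i) * (b j $ r * cnj (a i $ s)))"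
    using inner by (subst msum_eq) (auto intro!: eq_matI sum.cong)
  then show ?thesis unfolding transition_op_def by simp
qed

lemma T_carrier:
  assumes ca: "\<forall>i<nk. a i \<in> carrier_vec m" and cb: "\<forall>j<nk'. b j \<in> carrier_vec m"
  shows "transition_op m a nk b nk' \<in> carrier_mat m m"
  unfolding T_eq[OF ca cb] by simp

lemma T_apply:
  assumes oa: "orthonormal_fam m a nk" and ob: "orthonormal_fam m b nk'"
  shows "transition_op m a nk b nk' *\<^sub>v lcv m a nk c
     = complex_of_real (1 / sqrt (real nk)) \<cdot>\<^sub>v lcv m b nk' (\<lambda>j. \<Sum>i\<in>{0..<nk}. zeta nk ^ (j * i) * c i)"
proof -
  have ca: "\<forall>i<nk. a i \<in> carrier_vec m" and cb: "\<forall>j<nk'. b j \<in> carrier_vec m"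
    using oa ob unfolding orthonormal_fam_def by auto
  define s0 where "s0 = complex_of_real (1 / sqrt (real nk))"
  define u where "u = lcv m a nk c"
  have inner: "(\<Sum>s\<in>{0..<m}. u $ s * cnj (a i $ s)) = c i" if i: "i < nk" for i
  proof -
    have "u \<bullet>c a i = c i" unfolding u_def by (rule lcv_inner[OF oa i])
    moreover have "dim_vec (a i) = m" using ca i by auto
    ultimately show ?thesis unfolding scalar_prod_def by simp
  qed
  show ?thesis
  proof (rule eq_vecI)
    show "dim_vec (transition_op m a nk b nk' *\<^sub>v lcv m a nk c) =
      dim_vec (complex_of_real (1 / sqrt (real nk)) \<cdot>\<^sub>v lcv m b nk' (\<lambda>j. \<Sum>i = 0..<nk. zeta nk ^ (j * i) * c i))"
      using T_carrier[OF ca cb] by simp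
    fix r assume "r < dim_vec (complex_of_real (1 / sqrt (real nk)) \<cdot>\<^sub>v lcv m b nk' (\<lambda>j. \<Sum>i = 0..<nk. zeta nk ^ (j * i) * c i))"
    then have r: "r < m" by simp
    have "(transition_op m a nk b nk' *\<^sub>v u) $ r
        = (\<Sum>s\<in>{0..<m}. (s0 * (\<Sum>j\<in>{0..<nk'}. \<Sum>i\<in>{0..<nk}. zeta nk ^ (j * i) * (b j $ r * cnj (a i $ s)))) * u $ s)"
      unfolding T_eq[OF ca cb] s0_def using r by (simp add: scalar_prod_def u_def)
    also have "\<dots> = (\<Sum>s\<in>{0..<m}. \<Sum>j\<in>{0..<nk'}. \<Sum>i\<in>{0..<nk}. s0 * (zeta nk ^ (j * i) * b j $ r) * (u $ s * cnj (a i $ s)))"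
      by (simp add: sum_distrib_left sum_distrib_right mult_ac)
    also have "\<dots> = (\<Sum>j\<in>{0..<nk'}. \<Sum>i\<in>{0..<nk}. \<Sum>s\<in>{0..<m}. s0 * (zeta nk ^ (j * i) * b j $ r) * (u $ s * cnj (a i $ s)))"
      by (rule trans[OF sum.swap], rule sum.cong[OF refl], rule sum.swap)
    also have "\<dots> = s0 * (\<Sum>j\<in>{0..<nk'}. \<Sum>i\<in>{0..<nk}. zeta nk ^ (j * i) * b j $ r * (\<Sum>s\<in>{0..<m}. u $ s * cnj (a i $ s)))"
      by (simp add: sum_distrib_left mult.assoc)
    also have "\<dots> = s0 * (\<Sum>j\<in>{0..<nk'}. \<Sum>i\<in>{0..<nk}. zeta nk ^ (j * i) * b j $ r * c i)"
      using inner by simp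
    also have "\<dots> = (s0 \<cdot>\<^sub>v lcv m b nk' (\<lambda>j. \<Sum>i = 0..<nk. zeta nk ^ (j * i) * c i)) $ r"
      using r by (simp add: lcv_def sum_distrib_left sum_distrib_right mult.assoc mult.left_commute) (simp add: mult_ac)
    finally show "(transition_op m a nk b nk' *\<^sub>v lcv m a nk c) $ r =
      (complex_of_real (1 / sqrt (real nk)) \<cdot>\<^sub>v lcv m b nk' (\<lambda>j. \<Sum>i = 0..<nk. zeta nk ^ (j * i) * c i)) $ r"
      unfolding u_def s0_def .
  qed
qed

lemma adj_ker:
  fixes A :: "complex mat"
  assumes A: "A \<in> carrier_mat m m" and v: "v \<in> carrier_vec m"
  shows "(mat_adjoint A * A) *\<^sub>v v = 0\<^sub>v m \<longleftrightarrow> A *\<^sub>v v = 0\<^sub>v m"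
proof -
  have adjc: "mat_adjoint A \<in> carrier_mat m m" using A unfolding mat_adjoint_def by auto
  have adj_idx: "mat_adjoint A $$ (i, j) = cnj (A $$ (j, i))" if "i < m" "j < m" for i j
    using A that unfolding mat_adjoint_def by (simp add: mat_of_rows_def)
  define w where "w = A *\<^sub>v v"
  have wc: "w \<in> carrier_vec m" using A v unfolding w_def by simp
  have eq: "(mat_adjoint A * A) *\<^sub>v v = mat_adjoint A *\<^sub>v w"
    unfolding w_def using A adjc v by simp
  show ?thesis
  proof
    assume h: "(mat_adjoint A * A) *\<^sub>v v = 0\<^sub>v m"
    have "w \<bullet>c w = (\<Sum>j\<in>{0..<m}. w $ j * cnj (\<Sum>i\<in>{0..<m}. A $$ (j, i) * v $ i))"
      using wc A v unfolding w_def by (simp add: scalar_prod_def row_def)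
    also have "\<dots> = (\<Sum>j\<in>{0..<m}. \<Sum>i\<in>{0..<m}. cnj (v $ i) * (cnj (A $$ (j, i)) * w $ j))"
      by (simp add: sum_distrib_left mult_ac)
    also have "\<dots> = (\<Sum>i\<in>{0..<m}. \<Sum>j\<in>{0..<m}. cnj (v $ i) * (cnj (A $$ (j, i)) * w $ j))"
      by (rule sum.swap)
    also have "\<dots> = (\<Sum>i\<in>{0..<m}. cnj (v $ i) * (\<Sum>j\<in>{0..<m}. mat_adjoint A $$ (i, j) * w $ j))"
      by (simp add: adj_idx sum_distrib_left)
    also have "\<dots> = (\<Sum>i\<in>{0..<m}. cnj (v $ i) * ((mat_adjoint A *\<^sub>v w) $ i))"
      using adjc wc by (intro sum.cong) (auto simp: scalar_prod_def row_def)
    also have "\<dots> = 0" using h eq by simp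
    finally have "w \<bullet>c w = 0" .
    then show "A *\<^sub>v v = 0\<^sub>v m" using wc unfolding w_def by simp
  next
    assume "A *\<^sub>v v = 0\<^sub>v m"
    moreover have "mat_adjoint A *\<^sub>v 0\<^sub>v m = 0\<^sub>v m" using adjc by (intro eq_vecI) auto
    ultimately show "(mat_adjoint A * A) *\<^sub>v v = 0\<^sub>v m" using eq unfolding w_def by simp
  qed
qed

lemma smult_lcv: "s \<cdot>\<^sub>v lcv m e n f = lcv m e n (\<lambda>i. s * f i)"
  unfolding lcv_def by (intro eq_vecI) (auto simp: sum_distrib_left mult.assoc)

lemma smult_zero_iff_vec:
  fixes x :: "complex vec"
  assumes "x \<in> carrier_vec m" "s \<noteq> 0"
  shows "s \<cdot>\<^sub>v x = 0\<^sub>v m \<longleftrightarrow> x = 0\<^sub>v m"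
proof
  assume h: "s \<cdot>\<^sub>v x = 0\<^sub>v m"
  show "x = 0\<^sub>v m"
  proof (rule eq_vecI)
    fix k assume "k < dim_vec (0\<^sub>v m :: complex vec)"
    then have k: "k < m" by simp
    have "(s \<cdot>\<^sub>v x) $ k = 0" using h k by simp
    then have "s * x $ k = 0" using assms k by simp
    then show "x $ k = 0\<^sub>v m $ k" using assms k by simp
  qed (use assms in auto)
qed (use assms in auto)

lemma entangled_eq:
  assumes ca: "\<forall>i<nk. a i \<in> carrier_vec m"
  shows "entangled m a nk l = lcv m a nk (\<lambda>i. complex_of_real (1 / sqrt (real nk)) * inverse (zeta nk ^ (i * l)))"
  unfolding entangled_def finsum_lcv[OF ca] smult_lcv ..

lemma ker_T:
  assumes oa: "orthonormal_fam m a nk" and ob: "orthonormal_fam m b nk'" and le: "nk' \<le> nk"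
  shows "transition_op m a nk b nk' *\<^sub>v lcv m a nk c = 0\<^sub>v m \<longleftrightarrow>
     (\<forall>j<nk'. (\<Sum>i\<in>{0..<nk}. zeta nk ^ (j * i) * c i) = 0)"
proof (cases "nk = 0")
  case True
  then have "nk' = 0" using le by simp
  then show ?thesis unfolding T_apply[OF oa ob] using True
    by (intro iffI) (auto simp: lcv_def intro!: eq_vecI)
next
  case False
  then have "complex_of_real (1 / sqrt (real nk)) \<noteq> 0" by simp
  then show ?thesis unfolding T_apply[OF oa ob]
    by (simp add: smult_zero_iff_vec lcv_zero_iff[OF ob])
qed

lemma zeta_orth2:
  assumes p: "p < n" and q: "q < n"
  shows "(\<Sum>l\<in>{0..<n}. zeta n ^ (l * p) * inverse (zeta n ^ (q * l))) = (if p = q then of_nat n else 0)"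
  using zeta_orth[OF p q] by (simp add: mult.commute[of q])

lemma zeta_orth3:
  assumes p: "p < n" and q: "q < n"
  shows "(\<Sum>l\<in>{0..<n}. zeta n ^ (p * l) * inverse (zeta n ^ (l * q))) = (if p = q then of_nat n else 0)"
  using zeta_orth[OF p q] by (simp add: mult.commute[of p])

theorem corollary2p5:
  fixes m nk nk' :: nat and a b :: "nat \<Rightarrow> complex vec"
  assumes "orthonormal_fam m a nk"
    and "orthonormal_fam m b nk'"
    and "\<forall>i<nk. \<forall>j<nk'. a i \<bullet>c b j = 0"
    and "nk' \<le> nk"
  shows "ker_on m (mat_adjoint (transition_op m a nk b nk') * transition_op m a nk b nk')
            (cspan m a {0..<nk})
         = ker_on m (transition_op m a nk b nk') (cspan m a {0..<nk})
       \<and> ker_on m (transition_op m a nk b nk') (cspan m a {0..<nk})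
         = cspan m (entangled m a nk) {nk'..<nk}"
proof -
  note oa = assms(1) and ob = assms(2) and le = assms(4)
  have ca: "\<forall>i<nk. a i \<in> carrier_vec m" and cb: "\<forall>j<nk'. b j \<in> carrier_vec m"
    using oa ob unfolding orthonormal_fam_def by auto
  define T where "T = transition_op m a nk b nk'"
  define s0 where "s0 = complex_of_real (1 / sqrt (real nk))"
  define W where "W c j = (\<Sum>i\<in>{0..<nk}. zeta nk ^ (j * i) * c i)" for c j
  have Tc: "T \<in> carrier_mat m m" unfolding T_def by (rule T_carrier[OF ca cb])
  have E: "cspan m a {0..<nk} = range (lcv m a nk)"
    unfolding cspan_def finsum_lcv[OF ca] by auto
  have K: "ker_on m T (cspan m a {0..<nk}) = {lcv m a nk c | c. \<forall>j<nk'. W c j = 0}"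
    unfolding E ker_on_def T_def W_def using ker_T[OF oa ob le] by auto
  have K2: "ker_on m (mat_adjoint T * T) (cspan m a {0..<nk}) = ker_on m T (cspan m a {0..<nk})"
    unfolding E ker_on_def using adj_ker[OF Tc] by auto
  have S: "cspan m (entangled m a nk) {nk'..<nk}
      = {lcv m a nk (\<lambda>i. \<Sum>l\<in>{nk'..<nk}. d l * (s0 * inverse (zeta nk ^ (i * l)))) | d. True}"
    unfolding cspan_def entangled_eq[OF ca] lcv_lin[OF finite_atLeastLessThan] s0_def ..
  have s0sq: "s0 * s0 * of_nat nk = 1" if "nk > 0"
  proof -
    have "sqrt (real nk) * sqrt (real nk) = real nk" by simp
    then have "(1 / sqrt (real nk)) * (1 / sqrt (real nk)) * real nk = 1" using that by (simp add: field_simps)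
    then have "complex_of_real ((1 / sqrt (real nk)) * (1 / sqrt (real nk)) * real nk) = 1" by simp
    then show ?thesis by (simp only: s0_def of_real_mult of_real_of_nat_eq)
  qed
  have "{lcv m a nk c | c. \<forall>j<nk'. W c j = 0}
      = {lcv m a nk (\<lambda>i. \<Sum>l\<in>{nk'..<nk}. d l * (s0 * inverse (zeta nk ^ (i * l)))) | d. True}"
  proof (intro equalityI subsetI)
    fix v assume "v \<in> {lcv m a nk c | c. \<forall>j<nk'. W c j = 0}"
    then obtain c where v: "v = lcv m a nk c" and c: "\<forall>j<nk'. W c j = 0" by auto
    define d where "d l = s0 * W c l" for l
    have "lcv m a nk c = lcv m a nk (\<lambda>i. \<Sum>l\<in>{nk'..<nk}. d l * (s0 * inverse (zeta nk ^ (i * l))))"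
    proof (rule lcv_cong)
      fix i assume i: "i < nk"
      have "(\<Sum>l\<in>{nk'..<nk}. d l * (s0 * inverse (zeta nk ^ (i * l))))
          = (\<Sum>l\<in>{0..<nk'}. d l * (s0 * inverse (zeta nk ^ (i * l)))) + (\<Sum>l\<in>{nk'..<nk}. d l * (s0 * inverse (zeta nk ^ (i * l))))"
        using c unfolding d_def by simp
      also have "\<dots> = (\<Sum>l\<in>{0..<nk}. d l * (s0 * inverse (zeta nk ^ (i * l))))"
        using le by (intro sum.atLeastLessThan_concat) auto
      also have "\<dots> = (\<Sum>l\<in>{0..<nk}. \<Sum>i'\<in>{0..<nk}. s0 * (zeta nk ^ (l * i') * c i') * (s0 * inverse (zeta nk ^ (i * l))))"
        unfolding d_def W_def by (simp add: sum_distrib_left sum_distrib_right)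
      also have "\<dots> = (\<Sum>l\<in>{0..<nk}. \<Sum>i'\<in>{0..<nk}. s0 * s0 * c i' * (zeta nk ^ (l * i') * inverse (zeta nk ^ (i * l))))"
        by (intro sum.cong refl) (simp add: mult_ac)
      also have "\<dots> = (\<Sum>i'\<in>{0..<nk}. \<Sum>l\<in>{0..<nk}. s0 * s0 * c i' * (zeta nk ^ (l * i') * inverse (zeta nk ^ (i * l))))"
        by (rule sum.swap)
      also have "\<dots> = (\<Sum>i'\<in>{0..<nk}. s0 * s0 * c i' * (if i' = i then of_nat nk else 0))"
        by (intro sum.cong refl) (simp add: sum_distrib_left[symmetric] zeta_orth2 i)
      also have "\<dots> = s0 * s0 * c i * of_nat nk" using i by (simp add: if_distrib cong: if_cong)
      also have "\<dots> = c i" using s0sq i by (simp add: mult_ac)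
      finally show "c i = (\<Sum>l\<in>{nk'..<nk}. d l * (s0 * inverse (zeta nk ^ (i * l))))" by simp
    qed
    then show "v \<in> {lcv m a nk (\<lambda>i. \<Sum>l\<in>{nk'..<nk}. d l * (s0 * inverse (zeta nk ^ (i * l)))) | d. True}"
      using v by auto
  next
    fix v assume "v \<in> {lcv m a nk (\<lambda>i. \<Sum>l\<in>{nk'..<nk}. d l * (s0 * inverse (zeta nk ^ (i * l)))) | d. True}"
    then obtain d where v: "v = lcv m a nk (\<lambda>i. \<Sum>l\<in>{nk'..<nk}. d l * (s0 * inverse (zeta nk ^ (i * l))))" by auto
    have "W (\<lambda>i. \<Sum>l\<in>{nk'..<nk}. d l * (s0 * inverse (zeta nk ^ (i * l)))) j = 0" if j: "j < nk'" for j
    proof -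
      have "W (\<lambda>i. \<Sum>l\<in>{nk'..<nk}. d l * (s0 * inverse (zeta nk ^ (i * l)))) j
          = (\<Sum>i\<in>{0..<nk}. \<Sum>l\<in>{nk'..<nk}. zeta nk ^ (j * i) * (d l * (s0 * inverse (zeta nk ^ (i * l)))))"
        unfolding W_def by (simp add: sum_distrib_left)
      also have "\<dots> = (\<Sum>i\<in>{0..<nk}. \<Sum>l\<in>{nk'..<nk}. d l * s0 * (zeta nk ^ (j * i) * inverse (zeta nk ^ (i * l))))"
        by (intro sum.cong refl) (simp add: mult_ac)
      also have "\<dots> = (\<Sum>l\<in>{nk'..<nk}. \<Sum>i\<in>{0..<nk}. d l * s0 * (zeta nk ^ (j * i) * inverse (zeta nk ^ (i * l))))"
        by (rule sum.swap)
      also have "\<dots> = (\<Sum>l\<in>{nk'..<nk}. d l * s0 * (if j = l then of_nat nk else 0))"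
        using j le by (intro sum.cong refl) (simp add: sum_distrib_left[symmetric] zeta_orth3)
      also have "\<dots> = 0" using j by (intro sum.neutral) auto
      finally show ?thesis .
    qed
    then show "v \<in> {lcv m a nk c | c. \<forall>j<nk'. W c j = 0}" using v by auto
  qed
  then show ?thesis using K K2 S unfolding T_def by simp
qed

end
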